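(* Let $T\in[0,\infty]$. For every $\pi\in\Pi$ with $J_T(\pi)<\infty$ and every $\delta_{\mathrm{tol}}>0$ there exists a periodic strategy $\hat\pi\in\Pi$ such that $$J_T(\hat\pi)\le J_T(\pi)+\delta_{\mathrm{tol}}.$$
   Context: Let $G=(V,E,A,\phi)$ be a finite connected undirected graph with node set $V$, edge set $E$, edge lengths $A:E\to\mathbb{R}_{>0}$ and node weights $\phi:V\to\mathbb{R}_{>0}$. Let $|G|$ be its metric graph (each edge $e$ a closed interval of length $A(e)$ glued at its endpoints) with shortest-path metric $d$. Fix $k\ge1$ robots $r_1,\dots,r_k$; $d_k(p,p')=\max_i d(p_i,p'_i)$ on $|G|^k$. Feasible strategies: $\Pi=\{\pi\in C([0,\infty),|G|^k):\ d_k(\pi(t),\pi(t'))\le|t-t'|\ \forall t,t'\ge0\}$, $\pi=(\pi_{r_1},\dots,\pi_{r_k})$. A strategy $\pi$ is periodic if there exist $t^*\ge0$ and $0<W<\infty$ with $\pi(t^*+t+W)=\pi(t^*+t)$ for all $t\ge0$. For $v\in V$, $t\ge0$: $\tau^\pi(v,t)=\sup\{t'\le t:\pi_r(t')=v\text{ for some }r\}$ if nonempty, else $0$; $L^\pi_v(t)=t-\tau^\pi(v,t)$; $M^\pi(t)=\max_v\phi(v)L^\pi_v(t)$. For finite $T\ge0$, $J_T(\pi)=\sup_{t\ge T}M^\pi(t)$; $J_\infty(\pi)=\limsup_{t\to\infty}M^\pi(t)$. *)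

theory Defs
  imports "HOL-Analysis.Analysis" "HOL-Library.Extended_Real"
begin

text \<open>Each edge e
carries an arbitrary fixed orientation ends e = (tail, head); this orientation only serves
to coordinatise points on the edge and has no other meaning.\<close>

definition edge_conn :: "('e \<Rightarrow> 'v \<times> 'v) \<Rightarrow> 'e \<Rightarrow> 'v \<Rightarrow> 'v \<Rightarrow> bool" where
  "edge_conn ends e u v \<longleftrightarrow> ends e = (u, v) \<or> ends e = (v, u)"

definition walk_lengths ::
  "'e set \<Rightarrow> ('e \<Rightarrow> 'v \<times> 'v) \<Rightarrow> ('e \<Rightarrow> real) \<Rightarrow> 'v \<Rightarrow> 'v \<Rightarrow> real set" where
  "walk_lengths E ends A u v =
     {sum_list (map A es) | es xs. length xs = Suc (length es) \<and> hd xs = u \<and> last xs = v \<and>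
        (\<forall>i < length es. es ! i \<in> E \<and> edge_conn ends (es ! i) (xs ! i) (xs ! Suc i))}"

definition node_dist ::
  "'e set \<Rightarrow> ('e \<Rightarrow> 'v \<times> 'v) \<Rightarrow> ('e \<Rightarrow> real) \<Rightarrow> 'v \<Rightarrow> 'v \<Rightarrow> real" where
  "node_dist E ends A u v = Inf (walk_lengths E ends A u v)"

definition wgraph ::
  "'v set \<Rightarrow> 'e set \<Rightarrow> ('e \<Rightarrow> 'v \<times> 'v) \<Rightarrow> ('e \<Rightarrow> real) \<Rightarrow> ('v \<Rightarrow> real) \<Rightarrow> bool" where
  "wgraph V E ends A phi \<longleftrightarrow>
     finite V \<and> V \<noteq> {} \<and> finite E \<and>
     (\<forall>e\<in>E. fst (ends e) \<in> V \<and> snd (ends e) \<in> V \<and> fst (ends e) \<noteq> snd (ends e)) \<and>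
     (\<forall>e\<in>E. \<forall>e'\<in>E. edge_conn ends e' (fst (ends e)) (snd (ends e)) \<longrightarrow> e' = e) \<and>
     (\<forall>e\<in>E. A e > 0) \<and> (\<forall>v\<in>V. phi v > 0) \<and>
     (\<forall>u\<in>V. \<forall>v\<in>V. walk_lengths E ends A u v \<noteq> {})"

text \<open>A point of |G| is either a node, or an interior point of an edge e, at distance s
(0 < s < A e) from the tail fst (ends e). This is a canonical (non-redundant) description
of the quotient of the disjoint union of the closed edge intervals.\<close>
datatype ('v, 'e) mpoint = Node 'v | Inner 'e real

definition mpoints ::
  "'v set \<Rightarrow> 'e set \<Rightarrow> ('e \<Rightarrow> real) \<Rightarrow> ('v, 'e) mpoint set" where
  "mpoints V E A = Node ` V \<union> {Inner e s | e s. e \<in> E \<and> 0 < s \<and> s < A e}"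

definition dist_node ::
  "'e set \<Rightarrow> ('e \<Rightarrow> 'v \<times> 'v) \<Rightarrow> ('e \<Rightarrow> real) \<Rightarrow> ('v, 'e) mpoint \<Rightarrow> 'v \<Rightarrow> real" where
  "dist_node E ends A p w =
     (case p of Node u \<Rightarrow> node_dist E ends A u w
      | Inner e s \<Rightarrow> min (s + node_dist E ends A (fst (ends e)) w)
                         (A e - s + node_dist E ends A (snd (ends e)) w))"

text \<open>Shortest-path metric d on |G|: a shortest path either stays inside a single edge, or
leaves the start point and enters the end point through endpoints of their edges.\<close>
definition mdist ::
  "'e set \<Rightarrow> ('e \<Rightarrow> 'v \<times> 'v) \<Rightarrow> ('e \<Rightarrow> real) \<Rightarrow> ('v, 'e) mpoint \<Rightarrow> ('v, 'e) mpoint \<Rightarrow> real" where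
  "mdist E ends A p q =
     (case q of Node w \<Rightarrow> dist_node E ends A p w
      | Inner e' s' \<Rightarrow>
          (let via = min (s' + dist_node E ends A p (fst (ends e')))
                         (A e' - s' + dist_node E ends A p (snd (ends e')))
           in (case p of Inner e s \<Rightarrow> if e = e' then min \<bar>s - s'\<bar> via else via
               | Node _ \<Rightarrow> via)))"

text \<open>A joint strategy of k robots: str t i is the position of robot i (i < k) at time t;
only times t \<ge> 0 and indices i < k are meaningful.\<close>
type_synonym ('v, 'e) strategy = "real \<Rightarrow> nat \<Rightarrow> ('v, 'e) mpoint"

text \<open>The feasible set Pi: paths in |G|^k that are 1-Lipschitz w.r.t. the max metric d_k
(continuity is implied by the Lipschitz condition).\<close>
definition feasible ::
  "'v set \<Rightarrow> 'e set \<Rightarrow> ('e \<Rightarrow> 'v \<times> 'v) \<Rightarrow> ('e \<Rightarrow> real) \<Rightarrow> nat \<Rightarrow> ('v, 'e) strategy \<Rightarrow> bool" where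
  "feasible V E ends A k str \<longleftrightarrow>
     (\<forall>t\<ge>0. \<forall>i<k. str t i \<in> mpoints V E A) \<and>
     (\<forall>t\<ge>0. \<forall>t'\<ge>0. \<forall>i<k. mdist E ends A (str t i) (str t' i) \<le> \<bar>t - t'\<bar>)"

definition periodic :: "nat \<Rightarrow> ('v, 'e) strategy \<Rightarrow> bool" where
  "periodic k str \<longleftrightarrow>
     (\<exists>tstar\<ge>0. \<exists>W>0. \<forall>t\<ge>0. \<forall>i<k. str (tstar + t + W) i = str (tstar + t) i)"

definition last_visit :: "nat \<Rightarrow> ('v, 'e) strategy \<Rightarrow> 'v \<Rightarrow> real \<Rightarrow> real" where
  "last_visit k str v t =
     (let S = {t'. 0 \<le> t' \<and> t' \<le> t \<and> (\<exists>i<k. str t' i = Node v)} in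
      if S = {} then 0 else Sup S)"

definition latency :: "nat \<Rightarrow> ('v, 'e) strategy \<Rightarrow> 'v \<Rightarrow> real \<Rightarrow> real" where
  "latency k str v t = t - last_visit k str v t"

definition max_wlatency ::
  "'v set \<Rightarrow> ('v \<Rightarrow> real) \<Rightarrow> nat \<Rightarrow> ('v, 'e) strategy \<Rightarrow> real \<Rightarrow> real" where
  "max_wlatency V phi k str t = Max ((\<lambda>v. phi v * latency k str v t) ` V)"

definition cost ::
  "'v set \<Rightarrow> ('v \<Rightarrow> real) \<Rightarrow> nat \<Rightarrow> ereal \<Rightarrow> ('v, 'e) strategy \<Rightarrow> ereal" where
  "cost V phi k T str =
     (if T = \<infinity> then Limsup at_top (\<lambda>t. ereal (max_wlatency V phi k str t))
      else (SUP t\<in>{real_of_ereal T..}. ereal (max_wlatency V phi k str t)))"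

end

theory Submission
  imports Defs
begin

context
  fixes V :: "'v set" and E :: "'e set" and ends :: "'e \<Rightarrow> 'v \<times> 'v"
    and A :: "'e \<Rightarrow> real" and phi :: "'v \<Rightarrow> real"
  assumes G: "wgraph V E ends A phi"
begin

lemma wl_nonneg:
  assumes "w \<in> walk_lengths E ends A u v"
  shows "0 \<le> w"
proof -
  from assms obtain es xs where w: "w = sum_list (map A es)" and es: "\<forall>i<length es. es ! i \<in> E"
    unfolding walk_lengths_def by blast
  have "\<forall>x\<in>set (map A es). 0 \<le> x"
    using es G unfolding wgraph_def by (auto simp: in_set_conv_nth less_imp_le)
  then show ?thesis using w sum_list_nonneg by blast
qed

lemma wl_bdd: "bdd_below (walk_lengths E ends A u v)"
  using wl_nonneg by (intro bdd_belowI[of _ 0]) auto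

lemma wl_ne: "u \<in> V \<Longrightarrow> v \<in> V \<Longrightarrow> walk_lengths E ends A u v \<noteq> {}"
  using G unfolding wgraph_def by blast

lemma wl_zero: "0 \<in> walk_lengths E ends A u u"
  unfolding walk_lengths_def
  by (rule CollectI, rule exI[of _ "[]"], rule exI[of _ "[u]"]) auto

lemma nd_self: "node_dist E ends A u u \<le> 0"
  unfolding node_dist_def using wl_zero wl_bdd by (rule cInf_lower)

lemma nd_nonneg: "u \<in> V \<Longrightarrow> v \<in> V \<Longrightarrow> 0 \<le> node_dist E ends A u v"
  unfolding node_dist_def using wl_ne wl_nonneg by (intro cInf_greatest) auto

lemma nd_edge:
  assumes "e \<in> E"
  shows "node_dist E ends A (fst (ends e)) (snd (ends e)) \<le> A e"
    and "node_dist E ends A (snd (ends e)) (fst (ends e)) \<le> A e"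
proof -
  have "A e \<in> walk_lengths E ends A (fst (ends e)) (snd (ends e))"
    unfolding walk_lengths_def
    by (rule CollectI, rule exI[of _ "[e]"], rule exI[of _ "[fst (ends e), snd (ends e)]"])
       (auto simp: assms edge_conn_def)
  then show "node_dist E ends A (fst (ends e)) (snd (ends e)) \<le> A e"
    unfolding node_dist_def using wl_bdd by (rule cInf_lower)
  have "A e \<in> walk_lengths E ends A (snd (ends e)) (fst (ends e))"
    unfolding walk_lengths_def
    by (rule CollectI, rule exI[of _ "[e]"], rule exI[of _ "[snd (ends e), fst (ends e)]"])
       (auto simp: assms edge_conn_def)
  then show "node_dist E ends A (snd (ends e)) (fst (ends e)) \<le> A e"
    unfolding node_dist_def using wl_bdd by (rule cInf_lower)
qed

lemma concat_nth:
  assumes "length xs1 = Suc n" "xs2 \<noteq> []" "last xs1 = hd xs2" "n \<le> i" "i - n < length xs2"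
  shows "(xs1 @ tl xs2) ! i = xs2 ! (i - n)"
proof (cases "i = n")
  case True
  have "(xs1 @ tl xs2) ! i = xs1 ! n" using True assms(1) by (simp add: nth_append)
  also have "\<dots> = last xs1" using assms(1) by (subst last_conv_nth) auto
  also have "\<dots> = xs2 ! 0" using assms(2,3) by (simp add: hd_conv_nth)
  finally show ?thesis using True by simp
next
  case False
  then have "i \<ge> length xs1" using assms by auto
  then have "(xs1 @ tl xs2) ! i = tl xs2 ! (i - length xs1)" by (simp add: nth_append)
  also have "\<dots> = xs2 ! Suc (i - length xs1)"
    using assms False by (intro nth_tl) auto
  also have "Suc (i - length xs1) = i - n" using assms False by auto
  finally show ?thesis .
qed

lemma wl_concat:
  assumes "w1 \<in> walk_lengths E ends A u v" "w2 \<in> walk_lengths E ends A v w"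
  shows "w1 + w2 \<in> walk_lengths E ends A u w"
proof -
  from assms(1) obtain es1 xs1 where 1: "w1 = sum_list (map A es1)" "length xs1 = Suc (length es1)"
    "hd xs1 = u" "last xs1 = v"
    "\<forall>i < length es1. es1 ! i \<in> E \<and> edge_conn ends (es1 ! i) (xs1 ! i) (xs1 ! Suc i)"
    unfolding walk_lengths_def by blast
  from assms(2) obtain es2 xs2 where 2: "w2 = sum_list (map A es2)" "length xs2 = Suc (length es2)"
    "hd xs2 = v" "last xs2 = w"
    "\<forall>i < length es2. es2 ! i \<in> E \<and> edge_conn ends (es2 ! i) (xs2 ! i) (xs2 ! Suc i)"
    unfolding walk_lengths_def by blast
  define es where "es = es1 @ es2"
  define xs where "xs = xs1 @ tl xs2"
  have ne1: "xs1 \<noteq> []" and ne2: "xs2 \<noteq> []" using 1 2 by auto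
  have "length xs = Suc (length es)" using 1 2 by (simp add: xs_def es_def)
  moreover have "hd xs = u" using 1 ne1 by (simp add: xs_def)
  moreover have "last xs = w"
  proof (cases "tl xs2 = []")
    case True
    then have "xs2 = [v]" using ne2 2(3) by (metis hd_Cons_tl)
    then show ?thesis using True 1 2 by (simp add: xs_def)
  next
    case False
    then show ?thesis using 2 ne2 by (simp add: xs_def last_tl)
  qed
  moreover have "\<forall>i < length es. es ! i \<in> E \<and> edge_conn ends (es ! i) (xs ! i) (xs ! Suc i)"
  proof (intro allI impI)
    fix i assume i: "i < length es"
    show "es ! i \<in> E \<and> edge_conn ends (es ! i) (xs ! i) (xs ! Suc i)"
    proof (cases "i < length es1")
      case True
      then show ?thesis using 1 by (simp add: es_def xs_def nth_append)
    next
      case False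
      have a: "xs ! i = xs2 ! (i - length es1)" "xs ! Suc i = xs2 ! (Suc i - length es1)"
        unfolding xs_def using False 1 2 ne2 i by (auto simp: es_def intro!: concat_nth)
      have b: "es ! i = es2 ! (i - length es1)" using False by (simp add: es_def nth_append)
      have c: "i - length es1 < length es2" using i False by (simp add: es_def)
      have d: "Suc i - length es1 = Suc (i - length es1)" using False by simp
      show ?thesis using 2(5) c unfolding a b d by blast
    qed
  qed
  moreover have "w1 + w2 = sum_list (map A es)" using 1 2 by (simp add: es_def)
  ultimately show ?thesis unfolding walk_lengths_def by blast
qed

lemma nd_tri:
  assumes "u \<in> V" "v \<in> V" "w \<in> V"
  shows "node_dist E ends A u w \<le> node_dist E ends A u v + node_dist E ends A v w"
proof -
  have h: "node_dist E ends A u w \<le> w1 + w2"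
    if "w1 \<in> walk_lengths E ends A u v" "w2 \<in> walk_lengths E ends A v w" for w1 w2
    unfolding node_dist_def by (rule cInf_lower[OF wl_concat[OF that] wl_bdd])
  have h2: "node_dist E ends A u w - w1 \<le> node_dist E ends A v w"
    if "w1 \<in> walk_lengths E ends A u v" for w1
    unfolding node_dist_def[of E ends A v w]
  proof (rule cInf_greatest[OF wl_ne[OF assms(2,3)]])
    fix x assume "x \<in> walk_lengths E ends A v w"
    from h[OF that this] show "node_dist E ends A u w - w1 \<le> x" by simp
  qed
  have "node_dist E ends A u w - node_dist E ends A v w \<le> node_dist E ends A u v"
    unfolding node_dist_def[of E ends A u v]
  proof (rule cInf_greatest[OF wl_ne[OF assms(1,2)]])
    fix x assume "x \<in> walk_lengths E ends A u v"
    from h2[OF this] show "node_dist E ends A u w - node_dist E ends A v w \<le> x" by simp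
  qed
  then show ?thesis by simp
qed

end

definition exits :: "('e \<Rightarrow> 'v \<times> 'v) \<Rightarrow> ('e \<Rightarrow> real) \<Rightarrow> ('v, 'e) mpoint \<Rightarrow> ('v \<times> real) set" where
  "exits ends A p = (case p of Node u \<Rightarrow> {(u, 0)}
     | Inner e s \<Rightarrow> {(fst (ends e), s), (snd (ends e), A e - s)})"

lemma mdist_le_exit:
  assumes "(x, c) \<in> exits ends A p" "(y, d) \<in> exits ends A q"
  shows "mdist E ends A p q \<le> c + node_dist E ends A x y + d"
  using assms
  by (cases p; cases q) (auto simp: mdist_def dist_node_def exits_def Let_def min_le_iff_disj)

lemma mdist_le_direct: "mdist E ends A (Inner e s) (Inner e s') \<le> \<bar>s - s'\<bar>"
  by (simp add: mdist_def Let_def)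


lemma min_cases: "min a b = a \<or> min a b = (b::real)"
  by (auto simp: min_def)

lemma dn_cases: "\<exists>x c. (x, c) \<in> exits ends A p \<and> dist_node E ends A p w = c + node_dist E ends A x w"
proof (cases p)
  case (Node u)
  then show ?thesis by (auto simp: dist_node_def exits_def)
next
  case (Inner e s)
  show ?thesis
    using min_cases[of "s + node_dist E ends A (fst (ends e)) w" "A e - s + node_dist E ends A (snd (ends e)) w"]
    unfolding Inner dist_node_def exits_def by auto
qed

lemma mdist_cases:
  "(\<exists>x c y d. (x, c) \<in> exits ends A p \<and> (y, d) \<in> exits ends A q \<and>
      mdist E ends A p q = c + node_dist E ends A x y + d) \<or>
   (\<exists>e s s'. p = Inner e s \<and> q = Inner e s' \<and> mdist E ends A p q = \<bar>s - s'\<bar>)"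
proof (cases q)
  case (Node w)
  obtain x c where "(x, c) \<in> exits ends A p" "dist_node E ends A p w = c + node_dist E ends A x w"
    using dn_cases[where E=E and ends=ends and A=A and p=p and w=w] by blast
  moreover have "(w, 0) \<in> exits ends A q" using Node by (simp add: exits_def)
  ultimately have "(x, c) \<in> exits ends A p \<and> (w, 0) \<in> exits ends A q \<and>
      mdist E ends A p q = c + node_dist E ends A x w + 0"
    using Node by (simp add: mdist_def)
  then show ?thesis by blast
next
  case (Inner e' s')
  note qI = Inner
  define via where "via = min (s' + dist_node E ends A p (fst (ends e')))
                         (A e' - s' + dist_node E ends A p (snd (ends e')))"
  have "\<exists>y d. (y, d) \<in> exits ends A q \<and> via = d + dist_node E ends A p y"
    using min_cases[of "s' + dist_node E ends A p (fst (ends e'))" "A e' - s' + dist_node E ends A p (snd (ends e'))"]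
    unfolding via_def Inner exits_def by auto
  then obtain y d where yd: "(y, d) \<in> exits ends A q" "via = d + dist_node E ends A p y" by blast
  obtain x c where xc: "(x, c) \<in> exits ends A p" "dist_node E ends A p y = c + node_dist E ends A x y"
    using dn_cases[where E=E and ends=ends and A=A and p=p and w=y] by blast
  have V: "via = c + node_dist E ends A x y + d" using yd xc by simp
  have md: "mdist E ends A p q = (case p of Inner e s \<Rightarrow> if e = e' then min \<bar>s - s'\<bar> via else via
               | Node _ \<Rightarrow> via)"
    unfolding Inner mdist_def via_def Let_def by simp
  show ?thesis
  proof (cases p)
    case (Node u)
    then show ?thesis using md V xc yd by auto
  next
    case (Inner e s)
    note Inner2 = Inner
    show ?thesis
    proof (cases "e = e'")
      case True
      then have "mdist E ends A p q = min \<bar>s - s'\<bar> via" using md Inner2 by simp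
      then show ?thesis using min_cases[of "\<bar>s - s'\<bar>" via] V xc yd Inner2 qI True by metis
    next
      case False
      then show ?thesis using md V xc yd Inner2 by auto
    qed
  qed
qed

context
  fixes V :: "'v set" and E :: "'e set" and ends :: "'e \<Rightarrow> 'v \<times> 'v"
    and A :: "'e \<Rightarrow> real" and phi :: "'v \<Rightarrow> real"
  assumes G: "wgraph V E ends A phi"
begin

lemma exits_in:
  assumes "p \<in> mpoints V E A" "(x, c) \<in> exits ends A p"
  shows "x \<in> V" "0 \<le> c"
  using assms G unfolding mpoints_def exits_def wgraph_def by auto

lemma exits_pair:
  assumes "q \<in> mpoints V E A" "(y, d) \<in> exits ends A q" "(y', d') \<in> exits ends A q"
  shows "node_dist E ends A y y' \<le> d + d'"
proof (cases q)
  case (Node u)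
  then show ?thesis using assms nd_self[OF G] by (auto simp: exits_def)
next
  case (Inner e s)
  then have e: "e \<in> E" "0 < s" "s < A e" using assms(1) by (auto simp: mpoints_def)
  show ?thesis using assms(2,3) nd_self[OF G, of "fst (ends e)"] nd_self[OF G, of "snd (ends e)"] nd_edge[OF G e(1)] e unfolding Inner exits_def
    by (auto)
qed

lemma mdist_tri:
  assumes p: "p \<in> mpoints V E A" and q: "q \<in> mpoints V E A" and r: "r \<in> mpoints V E A"
  shows "mdist E ends A p r \<le> mdist E ends A p q + mdist E ends A q r"
proof -
  note ex = exits_in
  consider (EE) x c y d y' d' z c' where
      "(x, c) \<in> exits ends A p" "(y, d) \<in> exits ends A q" "mdist E ends A p q = c + node_dist E ends A x y + d"
      "(y', d') \<in> exits ends A q" "(z, c') \<in> exits ends A r" "mdist E ends A q r = d' + node_dist E ends A y' z + c'"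
    | (DE) e sp sq y' d' z c' where "p = Inner e sp" "q = Inner e sq" "mdist E ends A p q = \<bar>sp - sq\<bar>"
      "(y', d') \<in> exits ends A q" "(z, c') \<in> exits ends A r" "mdist E ends A q r = d' + node_dist E ends A y' z + c'"
    | (ED) x c y d e sq sr where
      "(x, c) \<in> exits ends A p" "(y, d) \<in> exits ends A q" "mdist E ends A p q = c + node_dist E ends A x y + d"
      "q = Inner e sq" "r = Inner e sr" "mdist E ends A q r = \<bar>sq - sr\<bar>"
    | (DD) e sp sq sr where "p = Inner e sp" "q = Inner e sq" "r = Inner e sr"
       "mdist E ends A p q = \<bar>sp - sq\<bar>" "mdist E ends A q r = \<bar>sq - sr\<bar>"
    using mdist_cases[where E=E and ends=ends and A=A and p=p and q=q]
      mdist_cases[where E=E and ends=ends and A=A and p=q and q=r]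
    by (elim disjE exE conjE) (metis, metis, metis, fastforce)
  then show ?thesis
  proof cases
    case EE
    have "mdist E ends A p r \<le> c + node_dist E ends A x z + c'"
      by (rule mdist_le_exit[OF EE(1,5)])
    also have "node_dist E ends A x z \<le> node_dist E ends A x y + node_dist E ends A y z"
      using nd_tri[OF G] ex[OF p EE(1)] ex[OF q EE(2)] ex[OF r EE(5)] by blast
    also have "node_dist E ends A y z \<le> node_dist E ends A y y' + node_dist E ends A y' z"
      using nd_tri[OF G] ex[OF q EE(4)] ex[OF q EE(2)] ex[OF r EE(5)] by blast
    also have "node_dist E ends A y y' \<le> d + d'" by (rule exits_pair[OF q EE(2,4)])
    finally show ?thesis using EE(3,6) by simp
  next
    case DE
    have "(y', d') = (fst (ends e), sq) \<or> (y', d') = (snd (ends e), A e - sq)"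
      using DE(2,4) by (simp add: exits_def)
    then obtain d'' where "(y', d'') \<in> exits ends A p" "d'' \<le> \<bar>sp - sq\<bar> + d'"
    proof (elim disjE)
      assume "(y', d') = (fst (ends e), sq)"
      then show ?thesis using that[of sp] DE(1) by (auto simp: exits_def)
    next
      assume "(y', d') = (snd (ends e), A e - sq)"
      then show ?thesis using that[of "A e - sp"] DE(1) by (auto simp: exits_def)
    qed
    then have "mdist E ends A p r \<le> d'' + node_dist E ends A y' z + c'"
      using mdist_le_exit[OF _ DE(5)] by blast
    then show ?thesis using DE(3,6) \<open>d'' \<le> _\<close> by simp
  next
    case ED
    have "(y, d) = (fst (ends e), sq) \<or> (y, d) = (snd (ends e), A e - sq)"
      using ED(2,4) by (simp add: exits_def)
    then obtain d'' where "(y, d'') \<in> exits ends A r" "d'' \<le> \<bar>sq - sr\<bar> + d"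
    proof (elim disjE)
      assume "(y, d) = (fst (ends e), sq)"
      then show ?thesis using that[of sr] ED(5) by (auto simp: exits_def)
    next
      assume "(y, d) = (snd (ends e), A e - sq)"
      then show ?thesis using that[of "A e - sr"] ED(5) by (auto simp: exits_def)
    qed
    then have "mdist E ends A p r \<le> c + node_dist E ends A x y + d''"
      using mdist_le_exit[OF ED(1)] by blast
    then show ?thesis using ED(3,6) \<open>d'' \<le> _\<close> by simp
  next
    case DD
    have "mdist E ends A p r \<le> \<bar>sp - sr\<bar>" unfolding DD(1,3) by (rule mdist_le_direct)
    then show ?thesis using DD(4,5) by simp
  qed
qed

end

definition lip_on :: "('a \<Rightarrow> 'a \<Rightarrow> real) \<Rightarrow> 'a set \<Rightarrow> real set \<Rightarrow> (real \<Rightarrow> 'a) \<Rightarrow> bool" where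
  "lip_on d X I f \<longleftrightarrow> (\<forall>t\<in>I. f t \<in> X) \<and> (\<forall>t\<in>I. \<forall>t'\<in>I. d (f t) (f t') \<le> \<bar>t - t'\<bar>)"

definition offs :: "real \<Rightarrow> real \<Rightarrow> real" where
  "offs P x = x - P * of_int \<lfloor>x / P\<rfloor>"

lemma offs_bounds: "P > 0 \<Longrightarrow> 0 \<le> offs P x \<and> offs P x < P"
  using floor_divide_lower[of P x] floor_divide_upper[of P x]
  by (auto simp: offs_def algebra_simps)

lemma floor_jr: "P > 0 \<Longrightarrow> 0 \<le> r \<Longrightarrow> r < P \<Longrightarrow> \<lfloor>(real j * P + r) / P\<rfloor> = int j"
  by (rule floor_unique) (auto simp: field_simps)

lemma offs_jr: "P > 0 \<Longrightarrow> 0 \<le> r \<Longrightarrow> r < P \<Longrightarrow> offs P (real j * P + r) = r"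
  using floor_jr[of P r j] by (simp add: offs_def)

lemma offs_P: "P > 0 \<Longrightarrow> offs P (x + P) = offs P x"
proof -
  assume P: "P > 0"
  have "(x + P) / P = x / P + of_int 1" using P by (simp add: field_simps)
  then have "\<lfloor>(x + P) / P\<rfloor> = \<lfloor>x / P\<rfloor> + 1" by (metis floor_add_int)
  then show ?thesis by (simp add: offs_def algebra_simps)
qed

lemma glue2:
  assumes tri: "\<forall>p\<in>X. \<forall>q\<in>X. \<forall>r\<in>X. d p r \<le> d p q + d q r"
    and g: "lip_on d X {0..e} \<gamma>" and h: "lip_on d X {0..L} h"
    and eq: "\<gamma> e = h 0" and e: "e \<ge> 0" and L: "L \<ge> 0"
  shows "lip_on d X {0..e + L} (\<lambda>r. if r \<le> e then \<gamma> r else h (r - e))"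
proof -
  let ?c = "\<lambda>r. if r \<le> e then \<gamma> r else h (r - e)"
  have gl: "\<And>t t'. t \<in> {0..e} \<Longrightarrow> t' \<in> {0..e} \<Longrightarrow> d (\<gamma> t) (\<gamma> t') \<le> \<bar>t - t'\<bar>"
    and hl: "\<And>t t'. t \<in> {0..L} \<Longrightarrow> t' \<in> {0..L} \<Longrightarrow> d (h t) (h t') \<le> \<bar>t - t'\<bar>"
    using g h unfolding lip_on_def by auto
  have X: "?c r \<in> X" if "r \<in> {0..e+L}" for r
    using g h that unfolding lip_on_def by auto
  have "d (?c r) (?c r') \<le> \<bar>r - r'\<bar>" if r: "r \<in> {0..e+L}" and r': "r' \<in> {0..e+L}" for r r'
  proof (cases "r \<le> e")
    case True
    show ?thesis
    proof (cases "r' \<le> e")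
      case True
      then show ?thesis using \<open>r \<le> e\<close> gl[of r r'] r r' by auto
    next
      case False
      have "d (\<gamma> r) (h (r' - e)) \<le> d (\<gamma> r) (\<gamma> e) + d (\<gamma> e) (h (r' - e))"
        using tri g h r r' True False e unfolding lip_on_def by auto
      also have "\<dots> \<le> \<bar>r - e\<bar> + \<bar>0 - (r' - e)\<bar>"
        using eq gl[of r e] hl[of 0 "r' - e"] r r' True False e L by (intro add_mono) auto
      finally show ?thesis using True False by auto
    qed
  next
    case False
    show ?thesis
    proof (cases "r' \<le> e")
      case True
      have "d (h (r - e)) (\<gamma> r') \<le> d (h (r - e)) (\<gamma> e) + d (\<gamma> e) (\<gamma> r')"
        using tri g h r r' True False e unfolding lip_on_def by auto
      also have "\<dots> \<le> \<bar>(r - e) - 0\<bar> + \<bar>e - r'\<bar>"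
        using eq gl[of e r'] hl[of "r - e" 0] r r' True False e L by (intro add_mono) auto
      finally show ?thesis using True False by auto
    next
      case False
      then show ?thesis using \<open>\<not> r \<le> e\<close> hl[of "r - e" "r' - e"] r r' by auto
    qed
  qed
  then show ?thesis using X unfolding lip_on_def by blast
qed


lemma glue_loop:
  assumes tri: "\<forall>p\<in>X. \<forall>q\<in>X. \<forall>r\<in>X. d p r \<le> d p q + d q r"
    and f: "lip_on d X {0..a} f" and c: "lip_on d X {0..P} c"
    and fa: "c 0 = f a" and cP: "c P = c 0" and P: "P > 0" and a: "a \<ge> 0"
  shows "lip_on d X {0..} (\<lambda>t. if t < a then f t else c (offs P (t - a)))"
proof -
  let ?g = "\<lambda>t. if t < a then f t else c (offs P (t - a))"
  have fl: "\<And>t t'. t \<in> {0..a} \<Longrightarrow> t' \<in> {0..a} \<Longrightarrow> d (f t) (f t') \<le> \<bar>t - t'\<bar>"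
    and cl: "\<And>t t'. t \<in> {0..P} \<Longrightarrow> t' \<in> {0..P} \<Longrightarrow> d (c t) (c t') \<le> \<bar>t - t'\<bar>"
    and fX: "\<And>t. t \<in> {0..a} \<Longrightarrow> f t \<in> X" and cX: "\<And>t. t \<in> {0..P} \<Longrightarrow> c t \<in> X"
    using f c unfolding lip_on_def by auto
  define n where "n t = \<lfloor>(t - a) / P\<rfloor>" for t
  define ofs where "ofs t = offs P (t - a)" for t
  have decomp: "t - a = P * of_int (n t) + ofs t" for t
    by (simp add: n_def ofs_def offs_def)
  have ob: "0 \<le> ofs t" "ofs t < P" for t using offs_bounds[OF P] by (auto simp: ofs_def)
  have n0: "n t \<ge> 0" if "t \<ge> a" for t
    using that P by (simp add: n_def)
  have oX: "c (ofs t) \<in> X" for t using cX ob[of t] by auto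
  have gX: "?g t \<in> X" if "t \<ge> 0" for t
    using that fX oX[of t] by (auto simp: ofs_def)
  have ole: "ofs t \<le> t - a" if "t \<ge> a" for t
  proof -
    have "0 \<le> P * of_int (n t)" using n0[OF that] P by simp
    then show ?thesis using decomp[of t] by linarith
  qed
  have T: "\<And>p q r. p \<in> X \<Longrightarrow> q \<in> X \<Longrightarrow> r \<in> X \<Longrightarrow> d p r \<le> d p q + d q r"
    using tri by blast
  have faX: "f a \<in> X" using fX a by auto
  have L: "d (?g t) (?g t') \<le> \<bar>t - t'\<bar>" if t: "t \<ge> 0" and t': "t' \<ge> 0" for t t'
  proof (cases "t < a")
    case True
    show ?thesis
    proof (cases "t' < a")
      case True
      then show ?thesis using \<open>t < a\<close> fl[of t t'] t t' by auto
    next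
      case False
      have "d (f t) (c (ofs t')) \<le> d (f t) (f a) + d (f a) (c (ofs t'))"
        using T[of "f t" "f a" "c (ofs t')"] fX[of t] faX oX[of t'] t True by auto
      also have "\<dots> \<le> \<bar>t - a\<bar> + \<bar>0 - ofs t'\<bar>"
        using fl[of t a] cl[of 0 "ofs t'"] fa t True a ob[of t'] P by (intro add_mono) auto
      finally show ?thesis using True False ole[of t'] ob[of t'] by (auto simp: ofs_def)
    qed
  next
    case False
    show ?thesis
    proof (cases "t' < a")
      case True
      have "d (c (ofs t)) (f t') \<le> d (c (ofs t)) (f a) + d (f a) (f t')"
        using T[of "c (ofs t)" "f a" "f t'"] fX[of t'] faX oX[of t] t' True by auto
      also have "\<dots> \<le> \<bar>ofs t - 0\<bar> + \<bar>a - t'\<bar>"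
        using fl[of a t'] cl[of "ofs t" 0] fa t' True a ob[of t] P by (intro add_mono) auto
      finally show ?thesis using True False ole[of t] ob[of t] by (auto simp: ofs_def)
    next
      case False
      have ta: "t \<ge> a" "t' \<ge> a" using False \<open>\<not> t < a\<close> by auto
      have gg: "?g t = c (ofs t)" "?g t' = c (ofs t')" using ta by (auto simp: ofs_def)
      consider "n t = n t'" | "n t < n t'" | "n t > n t'" by linarith
      then show ?thesis
      proof cases
        case 1
        then have "ofs t - ofs t' = t - t'" using decomp[of t] decomp[of t'] by simp
        then show ?thesis unfolding gg using cl[of "ofs t" "ofs t'"] ob[of t] ob[of t'] by auto
      next
        case 2
        then have "of_int (n t') - of_int (n t) \<ge> (1::real)" by linarith
        then have "P * (of_int (n t') - of_int (n t)) \<ge> P" using P by simp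
        then have big: "t' - t \<ge> P + ofs t' - ofs t" using decomp[of t] decomp[of t'] by (simp add: algebra_simps)
        have "d (c (ofs t)) (c (ofs t')) \<le> d (c (ofs t)) (c P) + d (c P) (c (ofs t'))"
          using T[of "c (ofs t)" "c P" "c (ofs t')"] oX cX[of P] P by auto
        also have "\<dots> \<le> \<bar>ofs t - P\<bar> + \<bar>0 - ofs t'\<bar>"
          using cl[of "ofs t" P] cl[of 0 "ofs t'"] cP ob[of t] ob[of t'] P by (intro add_mono) auto
        finally show ?thesis unfolding gg using big ob[of t] ob[of t'] by auto
      next
        case 3
        then have "of_int (n t) - of_int (n t') \<ge> (1::real)" by linarith
        then have "P * (of_int (n t) - of_int (n t')) \<ge> P" using P by simp
        then have big: "t - t' \<ge> P + ofs t - ofs t'" using decomp[of t] decomp[of t'] by (simp add: algebra_simps)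
        have "d (c (ofs t)) (c (ofs t')) \<le> d (c (ofs t)) (c 0) + d (c 0) (c (ofs t'))"
          using T[of "c (ofs t)" "c 0" "c (ofs t')"] oX cX[of 0] P by auto
        also have "\<dots> \<le> \<bar>ofs t - 0\<bar> + \<bar>P - ofs t'\<bar>"
          using cl[of "ofs t" 0] cl[of P "ofs t'"] cP ob[of t] ob[of t'] P by (intro add_mono) auto
        finally show ?thesis unfolding gg using big ob[of t] ob[of t'] by auto
      qed
    qed
  qed
  show ?thesis unfolding lip_on_def using gX L by auto
qed

lemma lv_upper:
  assumes "0 \<le> w" "w \<le> t" "i < k" "str w i = Node v"
  shows "latency k str v t \<le> t - w"
proof -
  let ?S = "{t'. 0 \<le> t' \<and> t' \<le> t \<and> (\<exists>i<k. str t' i = Node v)}"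
  have w: "w \<in> ?S" using assms by auto
  have "bdd_above ?S" by (rule bdd_aboveI[of _ t]) auto
  then have "w \<le> Sup ?S" using w by (rule cSup_upper[rotated])
  then show ?thesis using w unfolding latency_def last_visit_def Let_def by auto
qed

lemma lv_range:
  assumes "0 \<le> t"
  shows "0 \<le> latency k str v t \<and> latency k str v t \<le> t"
proof -
  let ?S = "{t'. 0 \<le> t' \<and> t' \<le> t \<and> (\<exists>i<k. str t' i = Node v)}"
  show ?thesis
  proof (cases "?S = {}")
    case True
    then show ?thesis using assms unfolding latency_def last_visit_def Let_def by simp
  next
    case False
    then obtain w where w: "w \<in> ?S" by blast
    have "bdd_above ?S" by (rule bdd_aboveI[of _ t]) auto
    then have "w \<le> Sup ?S" using w by (rule cSup_upper[rotated])
    moreover have "Sup ?S \<le> t" using False by (intro cSup_least) auto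
    ultimately show ?thesis using False w unfolding latency_def last_visit_def Let_def by auto
  qed
qed

lemma lv_lower:
  assumes "latency k str v t \<le> l" "l < t" "\<eta> > 0"
  shows "\<exists>w i. 0 \<le> w \<and> w \<le> t \<and> i < k \<and> str w i = Node v \<and> t - l - \<eta> < w"
proof -
  let ?S = "{t'. 0 \<le> t' \<and> t' \<le> t \<and> (\<exists>i<k. str t' i = Node v)}"
  have ne: "?S \<noteq> {}"
  proof
    assume "?S = {}"
    then have "latency k str v t = t" unfolding latency_def last_visit_def Let_def by simp
    then show False using assms by simp
  qed
  then have "last_visit k str v t = Sup ?S" unfolding last_visit_def Let_def by (rule if_not_P)
  then have "latency k str v t = t - Sup ?S" unfolding latency_def by simp
  then have "t - l - \<eta> < Sup ?S" using assms by simp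
  moreover have "bdd_above ?S" by (rule bdd_aboveI[of _ t]) auto
  ultimately obtain w where "w \<in> ?S" "t - l - \<eta> < w" using less_cSup_iff[OF ne] by blast
  then show ?thesis by blast
qed

lemma lv_eq:
  assumes "\<And>w i. 0 \<le> w \<Longrightarrow> w \<le> t \<Longrightarrow> i < k \<Longrightarrow> str w i = str' w i"
  shows "latency k str v t = latency k str' v t"
proof -
  have "{t'. 0 \<le> t' \<and> t' \<le> t \<and> (\<exists>i<k. str t' i = Node v)} =
        {t'. 0 \<le> t' \<and> t' \<le> t \<and> (\<exists>i<k. str' t' i = Node v)}"
    (is "?S1 = ?S2") using assms by auto
  then show ?thesis unfolding latency_def last_visit_def Let_def by (simp only:)
qed

lemma mw_ge: "finite V \<Longrightarrow> v \<in> V \<Longrightarrow> phi v * latency k str v t \<le> max_wlatency V phi k str t"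
  unfolding max_wlatency_def by (rule Max_ge) auto

lemma mw_le: "finite V \<Longrightarrow> V \<noteq> {} \<Longrightarrow> (\<And>v. v \<in> V \<Longrightarrow> phi v * latency k str v t \<le> B)
   \<Longrightarrow> max_wlatency V phi k str t \<le> B"
  unfolding max_wlatency_def by (subst Max_le_iff) auto

lemma fl_close:
  assumes "(\<epsilon>::real) > 0" "\<lfloor>x / \<epsilon>\<rfloor> = \<lfloor>y / \<epsilon>\<rfloor>"
  shows "\<bar>x - y\<bar> < \<epsilon>"
  using floor_divide_lower[OF assms(1), of x] floor_divide_upper[OF assms(1), of x]
    floor_divide_lower[OF assms(1), of y] floor_divide_upper[OF assms(1), of y] assms(2)
  by (simp add: algebra_simps abs_less_iff)

definition cd :: "real \<Rightarrow> ('v, 'e) mpoint \<Rightarrow> 'v + 'e \<times> int" where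
  "cd \<epsilon> p = (case p of Node u \<Rightarrow> Inl u | Inner e s \<Rightarrow> Inr (e, \<lfloor>s / \<epsilon>\<rfloor>))"

definition conn :: "real \<Rightarrow> ('v, 'e) mpoint \<Rightarrow> ('v, 'e) mpoint \<Rightarrow> real \<Rightarrow> ('v, 'e) mpoint" where
  "conn \<epsilon> p2 p1 a = (case p2 of Node u \<Rightarrow> Node u
     | Inner e s2 \<Rightarrow> (case p1 of Inner e' s1 \<Rightarrow> Inner e (s2 + (s1 - s2) * a / \<epsilon>) | Node u \<Rightarrow> Inner e s2))"

lemma cd_finite:
  assumes "finite V" "finite E" "\<epsilon> > 0"
  shows "finite (cd \<epsilon> ` mpoints V E A)"
proof -
  have "cd \<epsilon> ` mpoints V E A \<subseteq> Inl ` V \<union> (\<Union>e\<in>E. Inr ` ({e} \<times> {0..\<lceil>A e / \<epsilon>\<rceil>}))"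
  proof
    fix c assume "c \<in> cd \<epsilon> ` mpoints V E A"
    then obtain p where p: "p \<in> mpoints V E A" "c = cd \<epsilon> p" by blast
    show "c \<in> Inl ` V \<union> (\<Union>e\<in>E. Inr ` ({e} \<times> {0..\<lceil>A e / \<epsilon>\<rceil>}))"
    proof (cases p)
      case (Node u)
      then have uV: "u \<in> V" using p(1) by (auto simp: mpoints_def)
      have c: "c = Inl u" using p(2) Node by (simp add: cd_def)
      show ?thesis unfolding c by (rule UnI1[OF imageI[OF uV]])
    next
      case (Inner e s)
      then have es: "e \<in> E" "0 < s" "s < A e" using p by (auto simp: mpoints_def)
      have sd: "s / \<epsilon> \<le> A e / \<epsilon>" using es assms(3) by (intro divide_right_mono) auto
      have f0: "0 \<le> \<lfloor>s / \<epsilon>\<rfloor>" using es assms(3) by simp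
      have "\<lfloor>s / \<epsilon>\<rfloor> \<le> \<lceil>s / \<epsilon>\<rceil>" by (rule floor_le_ceiling)
      also have "\<lceil>s / \<epsilon>\<rceil> \<le> \<lceil>A e / \<epsilon>\<rceil>" using sd by (rule ceiling_mono)
      finally have "\<lfloor>s / \<epsilon>\<rfloor> \<le> \<lceil>A e / \<epsilon>\<rceil>" .
      then have "(e, \<lfloor>s / \<epsilon>\<rfloor>) \<in> {e} \<times> {0..\<lceil>A e / \<epsilon>\<rceil>}" using f0 by simp
      then have X: "Inr (e, \<lfloor>s / \<epsilon>\<rfloor>) \<in> (\<Union>e\<in>E. Inr ` ({e} \<times> {0..\<lceil>A e / \<epsilon>\<rceil>}))"
        by (intro UN_I[OF es(1)] imageI)
      have c: "c = Inr (e, \<lfloor>s / \<epsilon>\<rfloor>)" using p Inner by (simp add: cd_def)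
      show ?thesis unfolding c by (rule UnI2[OF X])
    qed
  qed
  moreover have "finite (Inl ` V \<union> (\<Union>e\<in>E. Inr ` ({e} \<times> {0..\<lceil>A e / \<epsilon>\<rceil>})))"
    using assms by (intro finite_UnI finite_imageI finite_UN_I finite_cartesian_product) auto
  ultimately show ?thesis by (rule finite_subset)
qed

lemma conn_props:
  assumes G: "wgraph V E ends A phi" and e: "\<epsilon> > 0"
    and p1: "p1 \<in> mpoints V E A" and p2: "p2 \<in> mpoints V E A" and cdq: "cd \<epsilon> p1 = cd \<epsilon> p2"
  shows "lip_on (mdist E ends A) (mpoints V E A) {0..\<epsilon>} (conn \<epsilon> p2 p1)"
    and "conn \<epsilon> p2 p1 0 = p2" and "conn \<epsilon> p2 p1 \<epsilon> = p1"
proof -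
  have "lip_on (mdist E ends A) (mpoints V E A) {0..\<epsilon>} (conn \<epsilon> p2 p1) \<and>
     conn \<epsilon> p2 p1 0 = p2 \<and> conn \<epsilon> p2 p1 \<epsilon> = p1"
  proof (cases p2)
    case (Node u)
    then have "p1 = Node u" using cdq by (cases p1) (auto simp: cd_def)
    moreover have "mdist E ends A (Node u) (Node u) \<le> 0"
      using nd_self[OF G] by (simp add: mdist_def dist_node_def)
    ultimately show ?thesis using Node p2 by (auto simp: lip_on_def conn_def)
  next
    case (Inner e s2)
    then obtain s1 where p1e: "p1 = Inner e s1" and fl: "\<lfloor>s1 / \<epsilon>\<rfloor> = \<lfloor>s2 / \<epsilon>\<rfloor>"
      using cdq by (cases p1) (auto simp: cd_def)
    have cl: "\<bar>s1 - s2\<bar> < \<epsilon>" using fl_close[OF e fl] .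
    have es: "e \<in> E" "0 < s1" "s1 < A e" "0 < s2" "s2 < A e"
      using p1 p2 p1e Inner by (auto simp: mpoints_def)
    have cv: "conn \<epsilon> p2 p1 a = Inner e (s2 + (s1 - s2) * (a / \<epsilon>))" for a
      using Inner p1e by (simp add: conn_def)
    have inX: "conn \<epsilon> p2 p1 a \<in> mpoints V E A" if a: "a \<in> {0..\<epsilon>}" for a
    proof -
      have l0: "0 \<le> a / \<epsilon>" "a / \<epsilon> \<le> 1" using a e by auto
      have "0 < s2 + (s1 - s2) * (a / \<epsilon>) \<and> s2 + (s1 - s2) * (a / \<epsilon>) < A e"
      proof (cases "s1 \<ge> s2")
        case True
        have "0 \<le> (s1 - s2) * (a / \<epsilon>)" by (rule mult_nonneg_nonneg) (use True l0 in auto)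
        moreover have "(s1 - s2) * (a / \<epsilon>) \<le> s1 - s2" by (rule mult_left_le) (use True l0 in auto)
        ultimately show ?thesis using es by (intro conjI; linarith)
      next
        case False
        have "0 \<le> (s2 - s1) * (a / \<epsilon>)" by (rule mult_nonneg_nonneg) (use False l0 in auto)
        moreover have "(s2 - s1) * (a / \<epsilon>) \<le> s2 - s1" by (rule mult_left_le) (use False l0 in auto)
        moreover have "(s1 - s2) * (a / \<epsilon>) = - ((s2 - s1) * (a / \<epsilon>))"
          by (simp only: mult_minus_left[symmetric] minus_diff_eq)
        ultimately show ?thesis using es by (intro conjI; linarith)
      qed
      then show ?thesis unfolding cv using es by (auto simp: mpoints_def)
    qed
    have lip: "mdist E ends A (conn \<epsilon> p2 p1 a) (conn \<epsilon> p2 p1 a') \<le> \<bar>a - a'\<bar>" for a a'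
    proof -
      have "mdist E ends A (conn \<epsilon> p2 p1 a) (conn \<epsilon> p2 p1 a') \<le>
          \<bar>(s2 + (s1 - s2) * (a / \<epsilon>)) - (s2 + (s1 - s2) * (a' / \<epsilon>))\<bar>"
        unfolding cv by (rule mdist_le_direct)
      also have "\<dots> = \<bar>(s1 - s2) * ((a - a') / \<epsilon>)\<bar>"
        by (simp add: diff_divide_distrib right_diff_distrib)
      also have "\<dots> = \<bar>s1 - s2\<bar> * (\<bar>a - a'\<bar> / \<epsilon>)"
        using e by (simp only: abs_mult abs_divide abs_of_pos)
      also have "\<dots> \<le> \<epsilon> * (\<bar>a - a'\<bar> / \<epsilon>)"
        using cl e by (intro mult_right_mono) auto
      also have "\<dots> = \<bar>a - a'\<bar>" using e by simp
      finally show ?thesis .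
    qed
    have c0: "conn \<epsilon> p2 p1 0 = p2" using cv[of 0] Inner by simp
    have c1: "conn \<epsilon> p2 p1 \<epsilon> = p1" using cv[of \<epsilon>] p1e e by simp
    have "lip_on (mdist E ends A) (mpoints V E A) {0..\<epsilon>} (conn \<epsilon> p2 p1)"
      unfolding lip_on_def using inX lip by blast
    then show ?thesis using c0 c1 by blast
  qed
  then show "lip_on (mdist E ends A) (mpoints V E A) {0..\<epsilon>} (conn \<epsilon> p2 p1)"
    and "conn \<epsilon> p2 p1 0 = p2" and "conn \<epsilon> p2 p1 \<epsilon> = p1" by auto
qed

lemma core:
  fixes V :: "'v set" and E :: "'e set" and ends :: "'e \<Rightarrow> 'v \<times> 'v"
    and A :: "'e \<Rightarrow> real" and phi :: "'v \<Rightarrow> real" and k :: nat and str :: "('v, 'e) strategy"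
  assumes G: "wgraph V E ends A phi" and feas: "feasible V E ends A k str"
    and T0: "T0 \<ge> 0" and bnd: "\<forall>t\<ge>T0. max_wlatency V phi k str t \<le> B" and dl: "\<delta> > 0"
  shows "\<exists>sh. feasible V E ends A k sh \<and> periodic k sh \<and> (\<forall>t\<ge>T0. max_wlatency V phi k sh t \<le> B + \<delta>)"
proof -
  have finV: "finite V" and neV: "V \<noteq> {}" and finE: "finite E" and phipos: "\<forall>v\<in>V. phi v > 0"
    using G unfolding wgraph_def by auto
  have inX: "\<And>t i. t \<ge> 0 \<Longrightarrow> i < k \<Longrightarrow> str t i \<in> mpoints V E A"
   and lipS: "\<And>t t' i. t \<ge> 0 \<Longrightarrow> t' \<ge> 0 \<Longrightarrow> i < k \<Longrightarrow> mdist E ends A (str t i) (str t' i) \<le> \<bar>t - t'\<bar>"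
    using feas unfolding feasible_def by auto
  have lb: "latency k str v t \<le> B / phi v" if "v \<in> V" "t \<ge> T0" for v t
  proof -
    have "phi v * latency k str v t \<le> B" using mw_ge[OF finV that(1)] bnd that(2) by (meson order_trans)
    then show ?thesis using phipos that(1) by (simp add: pos_le_divide_eq mult.commute)
  qed
  define \<Lambda> where "\<Lambda> = Max ((\<lambda>v. B / phi v) ` V)"
  have \<Lambda>: "B / phi v \<le> \<Lambda>" if "v \<in> V" for v unfolding \<Lambda>_def using finV that by (intro Max_ge) auto
  define \<Phi> where "\<Phi> = Max (phi ` V)"
  have \<Phi>: "phi v \<le> \<Phi>" if "v \<in> V" for v unfolding \<Phi>_def using finV that by (intro Max_ge) auto
  obtain v0 where "v0 \<in> V" using neV by blast
  have \<Phi>pos: "\<Phi> > 0" using \<Phi>[OF \<open>v0 \<in> V\<close>] phipos \<open>v0 \<in> V\<close> by force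
  define \<epsilon> where "\<epsilon> = \<delta> / (4 * \<Phi>)"
  have \<epsilon>pos: "\<epsilon> > 0" using dl \<Phi>pos by (simp add: \<epsilon>_def)
  have \<epsilon>phi: "4 * \<epsilon> * phi v \<le> \<delta>" if "v \<in> V" for v
  proof -
    have "4 * \<epsilon> * phi v \<le> 4 * \<epsilon> * \<Phi>" using \<Phi>[OF that] \<epsilon>pos by simp
    also have "\<dots> = \<delta>" using \<Phi>pos by (simp add: \<epsilon>_def)
    finally show ?thesis .
  qed
  define H where "H = \<bar>\<Lambda>\<bar> + \<epsilon> + 1"
  have Hpos: "H > 0" "H \<ge> \<Lambda> + \<epsilon> + 1" using \<epsilon>pos by (auto simp: H_def)
  define tt where "tt n = T0 + H + real n * H" for n :: nat
  define key where "key n = (restrict (\<lambda>i. cd \<epsilon> (str (tt n) i)) {..<k},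
                            restrict (\<lambda>v. \<lfloor>latency k str v (tt n) / \<epsilon>\<rfloor>) V)" for n
  define R where "R = PiE {..<k} (\<lambda>_. cd \<epsilon> ` mpoints V E A) \<times> PiE V (\<lambda>_. {0..\<lfloor>\<Lambda> / \<epsilon>\<rfloor>})"
  have ttT0: "tt n \<ge> T0" "tt n \<ge> 0" for n using T0 Hpos by (auto simp: tt_def)
  have keyR: "key n \<in> R" for n
  proof -
    have "restrict (\<lambda>i. cd \<epsilon> (str (tt n) i)) {..<k} \<in> PiE {..<k} (\<lambda>_. cd \<epsilon> ` mpoints V E A)"
      unfolding restrict_PiE_iff using inX ttT0 by (intro ballI imageI) auto
    moreover have "restrict (\<lambda>v. \<lfloor>latency k str v (tt n) / \<epsilon>\<rfloor>) V \<in> PiE V (\<lambda>_. {0..\<lfloor>\<Lambda> / \<epsilon>\<rfloor>})"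
    proof -
      have "\<lfloor>latency k str v (tt n) / \<epsilon>\<rfloor> \<in> {0..\<lfloor>\<Lambda> / \<epsilon>\<rfloor>}" if "v \<in> V" for v
      proof -
        have l0: "0 \<le> latency k str v (tt n)" by (rule conjunct1[OF lv_range[OF ttT0(2)]])
        have l1: "latency k str v (tt n) \<le> \<Lambda>" using lb[OF that ttT0(1)[of n]] \<Lambda>[OF that] by linarith
        have d0: "0 \<le> latency k str v (tt n) / \<epsilon>" using l0 \<epsilon>pos by simp
        have d1: "latency k str v (tt n) / \<epsilon> \<le> \<Lambda> / \<epsilon>"
          by (rule divide_right_mono[OF l1]) (use \<epsilon>pos in simp)
        have "0 \<le> \<lfloor>latency k str v (tt n) / \<epsilon>\<rfloor>" using d0 by simp
        moreover have "\<lfloor>latency k str v (tt n) / \<epsilon>\<rfloor> \<le> \<lfloor>\<Lambda> / \<epsilon>\<rfloor>" using d1 by (rule floor_mono)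
        ultimately show ?thesis by simp
      qed
      then show ?thesis unfolding restrict_PiE_iff by blast
    qed
    ultimately show ?thesis unfolding key_def R_def by (rule SigmaI)
  qed
  have finR: "finite R" unfolding R_def
    using cd_finite[OF finV finE \<epsilon>pos] finV by (intro finite_cartesian_product finite_PiE) auto
  have "\<not> inj key"
  proof
    assume "inj key"
    moreover have "finite (range key)" by (rule finite_subset[OF image_subsetI[OF keyR] finR])
    ultimately have "finite (UNIV :: nat set)" using finite_imageD[of key UNIV] by blast
    then show False by simp
  qed
  then obtain a b where ab: "a \<noteq> b" "key a = key b" unfolding inj_def by blast
  obtain n m where nm: "n < m" "key n = key m"
  proof (cases "a < b")
    case True
    then show ?thesis using that ab by blast
  next
    case False
    then have "b < a" using ab(1) by simp
    then show ?thesis using that ab by metis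
  qed
  define t1 where "t1 = tt n"
  define t2 where "t2 = tt m"
  have t1T0: "t1 \<ge> T0" and t1pos: "t1 \<ge> 0" and t2pos: "t2 \<ge> 0" using ttT0 by (auto simp: t1_def t2_def)
  have t1big: "t1 \<ge> \<Lambda> + \<epsilon> + 1"
  proof -
    have "0 \<le> real n * H" using Hpos by simp
    then show ?thesis using Hpos T0 unfolding t1_def tt_def by linarith
  qed
  have t21: "t2 - t1 \<ge> H"
  proof -
    have "real m - real n \<ge> 1" using nm(1) by simp
    then have "(real m - real n) * H \<ge> H" using Hpos by simp
    then show ?thesis by (simp add: t1_def t2_def tt_def algebra_simps)
  qed
  have cdeq: "cd \<epsilon> (str t1 i) = cd \<epsilon> (str t2 i)" if "i < k" for i
  proof -
    have "fst (key n) i = fst (key m) i" using nm(2) by simp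
    then show ?thesis using that by (simp add: key_def t1_def t2_def)
  qed
  have Lclose: "\<bar>latency k str v t1 - latency k str v t2\<bar> < \<epsilon>" if "v \<in> V" for v
  proof -
    have "snd (key n) v = snd (key m) v" using nm(2) by simp
    then have "\<lfloor>latency k str v t1 / \<epsilon>\<rfloor> = \<lfloor>latency k str v t2 / \<epsilon>\<rfloor>"
      using that by (simp add: key_def t1_def t2_def)
    then show ?thesis by (rule fl_close[OF \<epsilon>pos])
  qed
  have t2big: "t2 - t1 \<ge> \<Lambda> + \<epsilon> + 1" using t21 Hpos by linarith
  have tri: "\<forall>p\<in>mpoints V E A. \<forall>q\<in>mpoints V E A. \<forall>r\<in>mpoints V E A.
      mdist E ends A p r \<le> mdist E ends A p q + mdist E ends A q r"
    using mdist_tri[OF G] by blast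
  define P where "P = t2 - t1 + \<epsilon>"
  have Ppos: "P > 0" "P > \<epsilon>" using t21 \<epsilon>pos Hpos by (auto simp: P_def)
  define cyc where "cyc i r = (if r \<le> \<epsilon> then conn \<epsilon> (str t2 i) (str t1 i) r else str (t1 + (r - \<epsilon>)) i)" for i r
  define sh where "sh t i = (if t < t2 then str t i else cyc i (offs P (t - t2)))" for t i
  have cp: "lip_on (mdist E ends A) (mpoints V E A) {0..\<epsilon>} (conn \<epsilon> (str t2 i) (str t1 i))"
      "conn \<epsilon> (str t2 i) (str t1 i) 0 = str t2 i" "conn \<epsilon> (str t2 i) (str t1 i) \<epsilon> = str t1 i"
    if "i < k" for i
    using conn_props[OF G \<epsilon>pos inX[OF t1pos that] inX[OF t2pos that] cdeq[OF that]] by auto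
  have cyc0: "cyc i 0 = str t2 i" if "i < k" for i
    using cp(2)[OF that] \<epsilon>pos by (simp add: cyc_def)
  have cyc_pi: "cyc i r = str (t1 + r - \<epsilon>) i" if "i < k" "\<epsilon> \<le> r" for i r
  proof (cases "r = \<epsilon>")
    case True
    then show ?thesis using cp(3)[OF that(1)] by (simp add: cyc_def)
  next
    case False
    then show ?thesis using that by (simp add: cyc_def algebra_simps)
  qed
  have lipsh: "lip_on (mdist E ends A) (mpoints V E A) {0..} (\<lambda>t. sh t i)" if i: "i < k" for i
  proof -
    have h: "lip_on (mdist E ends A) (mpoints V E A) {0..t2 - t1} (\<lambda>b. str (t1 + b) i)"
    proof -
      have "mdist E ends A (str (t1 + b) i) (str (t1 + b') i) \<le> \<bar>b - b'\<bar>"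
        if "b \<in> {0..t2 - t1}" "b' \<in> {0..t2 - t1}" for b b'
        using lipS[of "t1 + b" "t1 + b'" i] that i t1pos by simp
      moreover have "str (t1 + b) i \<in> mpoints V E A" if "b \<in> {0..t2 - t1}" for b
        using inX[of "t1 + b" i] that i t1pos by simp
      ultimately show ?thesis unfolding lip_on_def by blast
    qed
    have c: "lip_on (mdist E ends A) (mpoints V E A) {0..\<epsilon> + (t2 - t1)} (cyc i)"
      unfolding cyc_def
      by (rule glue2[OF tri cp(1)[OF i] h]) (use cp(3)[OF i] \<epsilon>pos t21 Hpos in auto)
    have c': "lip_on (mdist E ends A) (mpoints V E A) {0..P} (cyc i)"
      using c by (simp add: P_def add.commute)
    have f: "lip_on (mdist E ends A) (mpoints V E A) {0..t2} (\<lambda>t. str t i)"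
      unfolding lip_on_def using inX lipS i by auto
    have cP: "cyc i P = cyc i 0"
      using cyc_pi[OF i, of P] Ppos cyc0[OF i] by (simp add: P_def)
    show ?thesis unfolding sh_def
      by (rule glue_loop[OF tri f c' cyc0[OF i] cP Ppos(1) t2pos])
  qed
  have feas_sh: "feasible V E ends A k sh"
    using lipsh unfolding feasible_def lip_on_def by auto
  have pp: "\<forall>t\<ge>0. \<forall>i<k. sh (t2 + t + P) i = sh (t2 + t) i"
  proof (intro allI impI)
    fix t :: real and i :: nat assume t: "0 \<le> t" and "i < k"
    have "offs P (t2 + t + P - t2) = offs P (t2 + t - t2)"
      using offs_P[OF Ppos(1), of t] by simp
    then show "sh (t2 + t + P) i = sh (t2 + t) i"
      using t Ppos unfolding sh_def by simp
  qed
  have per_sh: "periodic k sh"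
    unfolding periodic_def using pp t2pos Ppos(1) by blast
  have V1: "sh w i = str w i" if "0 \<le> w" "w \<le> t2" "i < k" for w i
  proof (cases "w < t2")
    case True
    then show ?thesis by (simp add: sh_def)
  next
    case False
    then have "w = t2" using that by simp
    then show ?thesis using cyc0[OF that(3)] by (simp add: sh_def offs_def)
  qed
  have V3: "sh (t2 + real j * P + r) i = cyc i r" if "0 \<le> r" "r < P" for j r i
  proof -
    have "0 \<le> real j * P" using Ppos by simp
    then have "\<not> t2 + real j * P + r < t2" using that by linarith
    moreover have "offs P (t2 + real j * P + r - t2) = r"
      using offs_jr[OF Ppos(1) that, of j] by simp
    ultimately show ?thesis by (simp add: sh_def)
  qed
  have V2: "sh (t2 + real j * P - (t2 - w)) i = str w i" if "t1 \<le> w" "w \<le> t2" "i < k" for j w i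
  proof (cases j)
    case 0
    then show ?thesis using V1[of w i] that t1pos by simp
  next
    case (Suc j')
    show ?thesis
    proof (cases "w < t2")
      case True
      have eq: "t2 + real j * P - (t2 - w) = t2 + real j' * P + (\<epsilon> + w - t1)"
        using Suc by (simp add: P_def algebra_simps)
      have "sh (t2 + real j' * P + (\<epsilon> + w - t1)) i = cyc i (\<epsilon> + w - t1)"
        by (rule V3) (use that True \<epsilon>pos in \<open>auto simp: P_def\<close>)
      also have "\<dots> = str w i" using cyc_pi[OF that(3), of "\<epsilon> + w - t1"] that by simp
      finally show ?thesis unfolding eq .
    next
      case False
      then have "w = t2" using that by simp
      then show ?thesis using V3[of 0 j i] Ppos cyc0[OF that(3)] by simp
    qed
  qed
  have decomp: "\<exists>j::nat. \<exists>r. 0 \<le> r \<and> r < P \<and> t = t2 + real j * P + r" if "t \<ge> t2" for t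
  proof -
    define j where "j = nat \<lfloor>(t - t2) / P\<rfloor>"
    have "\<lfloor>(t - t2) / P\<rfloor> \<ge> 0" using that Ppos by simp
    then have "real j = of_int \<lfloor>(t - t2) / P\<rfloor>" by (simp add: j_def)
    then have "t = t2 + real j * P + offs P (t - t2)" by (simp add: offs_def algebra_simps)
    then show ?thesis using offs_bounds[OF Ppos(1), of "t - t2"] by blast
  qed
  have latb: "latency k sh v t \<le> B / phi v + 4 * \<epsilon>" if v: "v \<in> V" and t: "t \<ge> T0" for v t
  proof -
    define l where "l = B / phi v"
    have ll: "l \<le> \<Lambda>" using \<Lambda>[OF v] by (simp add: l_def)
    define L2 where "L2 = latency k str v t2"
    have L2l: "L2 \<le> l" using lb[OF v, of t2] t1T0 t21 Hpos by (simp add: L2_def l_def)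
    show ?thesis
    proof (cases "t \<le> t2")
      case True
      have "latency k sh v t = latency k str v t"
        by (rule lv_eq) (use V1 True in auto)
      then show ?thesis using lb[OF v t] \<epsilon>pos by simp
    next
      case False
      then obtain j r where jr: "0 \<le> r" "r < P" "t = t2 + real j * P + r" using decomp[of t] by auto
      have C: "latency k sh v t < r + L2 + \<epsilon>"
      proof -
        obtain w2 i2 where w2: "0 \<le> w2" "w2 \<le> t2" "i2 < k" "str w2 i2 = Node v" "t2 - L2 - \<epsilon> < w2"
        proof -
          have a: "latency k str v t2 \<le> L2" by (simp add: L2_def)
          have b: "L2 < t2" using L2l ll t1big t21 Hpos \<epsilon>pos by linarith
          show ?thesis using lv_lower[OF a b \<epsilon>pos] that by blast
        qed
        have w2t1: "t1 \<le> w2" using w2(5) L2l ll t2big by linarith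
        have vis: "sh (t2 + real j * P - (t2 - w2)) i2 = Node v" using V2[OF w2t1 w2(2,3), of j] w2(4) by simp
        have jP: "0 \<le> real j * P" using Ppos by simp
        have \<tau>0: "0 \<le> t2 + real j * P - (t2 - w2)" using jP w2 by simp
        have \<tau>t: "t2 + real j * P - (t2 - w2) \<le> t" using jr w2 by simp
        have "latency k sh v t \<le> t - (t2 + real j * P - (t2 - w2))"
          by (rule lv_upper[where str=sh, OF \<tau>0 \<tau>t w2(3) vis])
        then show ?thesis using jr w2 by simp
      qed
      show ?thesis
      proof (cases "r < \<epsilon>")
        case True
        then show ?thesis using C L2l \<epsilon>pos unfolding l_def by linarith
      next
        case False
        define u where "u = t1 + r - \<epsilon>"
        have u: "t1 \<le> u" "u < t2" "T0 \<le> u" using False jr t1T0 by (auto simp: u_def P_def)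
        have Lu: "latency k str v u \<le> l" using lb[OF v u(3)] by (simp add: l_def)
        obtain w i where w: "0 \<le> w" "w \<le> u" "i < k" "str w i = Node v" "u - l - \<epsilon> < w"
        proof -
          have "l < u" using ll t1big u \<epsilon>pos by linarith
          then show ?thesis using lv_lower[OF Lu _ \<epsilon>pos] that by blast
        qed
        show ?thesis
        proof (cases "t1 \<le> w")
          case True
          define r' where "r' = \<epsilon> + w - t1"
          have r': "\<epsilon> \<le> r'" "r' \<le> r" "0 \<le> r'" "r' < P" using True w u jr \<epsilon>pos by (auto simp: r'_def u_def)
          have "sh (t2 + real j * P + r') i = str w i"
            using V3[OF r'(3,4), of j i] cyc_pi[OF w(3) r'(1)] by (simp add: r'_def)
          then have vis: "sh (t2 + real j * P + r') i = Node v" using w by simp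
          have jP: "0 \<le> real j * P" using Ppos by simp
          have \<tau>0: "0 \<le> t2 + real j * P + r'" using jP r' t2pos by simp
          have \<tau>t: "t2 + real j * P + r' \<le> t" using jr r' by simp
          have "latency k sh v t \<le> t - (t2 + real j * P + r')"
            by (rule lv_upper[where str=sh, OF \<tau>0 \<tau>t w(3) vis])
          then show ?thesis using jr w r' \<epsilon>pos unfolding u_def r'_def l_def by linarith
        next
          case False
          have L1: "latency k str v t1 \<le> t1 - w" by (rule lv_upper[where str=str, OF w(1) _ w(3,4)]) (use False in simp)
          have "\<bar>latency k str v t1 - L2\<bar> < \<epsilon>" using Lclose[OF v] by (simp add: L2_def)
          then show ?thesis using C L1 w(5) \<epsilon>pos jr unfolding u_def l_def abs_less_iff by linarith
        qed
      qed
    qed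
  qed
  have "max_wlatency V phi k sh t \<le> B + \<delta>" if t: "t \<ge> T0" for t
  proof (rule mw_le[OF finV neV])
    fix v assume v: "v \<in> V"
    have pv: "phi v > 0" using phipos v by simp
    have "phi v * latency k sh v t \<le> phi v * (B / phi v + 4 * \<epsilon>)"
      using latb[OF v t] pv by (intro mult_left_mono) auto
    also have "\<dots> = B + 4 * \<epsilon> * phi v" using pv by (simp add: algebra_simps)
    also have "\<dots> \<le> B + \<delta>" using \<epsilon>phi[OF v] by simp
    finally show "phi v * latency k sh v t \<le> B + \<delta>" .
  qed
  then show ?thesis using feas_sh per_sh by blast
qed

theorem mainTheorem3:
  fixes V :: "'v set" and E :: "'e set" and ends :: "'e \<Rightarrow> 'v \<times> 'v"
    and A :: "'e \<Rightarrow> real" and phi :: "'v \<Rightarrow> real" and k :: nat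
    and T :: ereal and str :: "('v, 'e) strategy" and delta :: real
  assumes "wgraph V E ends A phi"
    and "k \<ge> 1"
    and "T \<ge> 0"
    and "feasible V E ends A k str"
    and "cost V phi k T str < \<infinity>"
    and "delta > 0"
  shows "\<exists>strhat. feasible V E ends A k strhat \<and> periodic k strhat \<and>
           cost V phi k T strhat \<le> cost V phi k T str + ereal delta"
proof -
  note G = assms(1) and feas = assms(4) and fin = assms(5) and dl = assms(6)
  have finV: "finite V" and neV: "V \<noteq> {}" and phipos: "\<forall>v\<in>V. phi v > 0"
    using G unfolding wgraph_def by auto
  obtain v0 where v0: "v0 \<in> V" using neV by blast
  have Mnn: "0 \<le> max_wlatency V phi k str t" if "t \<ge> 0" for t
  proof -
    have "0 \<le> phi v0 * latency k str v0 t"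
      using phipos v0 lv_range[OF that, of k str v0] by (intro mult_nonneg_nonneg) auto
    also have "\<dots> \<le> max_wlatency V phi k str t" by (rule mw_ge[OF finV v0])
    finally show ?thesis .
  qed
  show ?thesis
  proof (cases "T = \<infinity>")
    case True
    define J where "J = Limsup at_top (\<lambda>t. ereal (max_wlatency V phi k str t))"
    have cJ: "cost V phi k T str = J" using True by (simp add: cost_def J_def)
    have J0: "0 \<le> J" unfolding J_def
    proof (rule le_Limsup)
      show "(at_top :: real filter) \<noteq> bot" by simp
      show "\<forall>\<^sub>F x in at_top. 0 \<le> ereal (max_wlatency V phi k str x)"
        using Mnn by (intro eventually_at_top_linorderI[of 0]) auto
    qed
    have "J < \<infinity>" using fin cJ by simp
    then obtain Jr where Jr: "J = ereal Jr" using J0 by (cases J) auto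
    have "J < ereal (Jr + delta / 2)" using Jr dl by simp
    then have "\<forall>\<^sub>F t in at_top. ereal (max_wlatency V phi k str t) < ereal (Jr + delta / 2)"
      unfolding J_def by (rule Limsup_lessD)
    then obtain T1 where T1: "\<And>t. t \<ge> T1 \<Longrightarrow> max_wlatency V phi k str t < Jr + delta / 2"
      unfolding eventually_at_top_linorder by auto
    define T0 where "T0 = max T1 0"
    have bnd: "\<forall>t\<ge>T0. max_wlatency V phi k str t \<le> Jr + delta / 2"
      using T1 by (auto simp: T0_def less_imp_le)
    obtain sh where sh: "feasible V E ends A k sh" "periodic k sh"
      "\<forall>t\<ge>T0. max_wlatency V phi k sh t \<le> Jr + delta / 2 + delta / 2"
      using core[OF G feas _ bnd, of "delta / 2"] dl by (auto simp: T0_def)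
    have "cost V phi k T sh = Limsup at_top (\<lambda>t. ereal (max_wlatency V phi k sh t))"
      using True by (simp add: cost_def)
    also have "\<dots> \<le> ereal (Jr + delta)"
    proof (rule Limsup_bounded)
      show "\<forall>\<^sub>F t in at_top. ereal (max_wlatency V phi k sh t) \<le> ereal (Jr + delta)"
        using sh(3) by (intro eventually_at_top_linorderI[of T0]) auto
    qed
    also have "\<dots> = cost V phi k T str + ereal delta" using cJ Jr by simp
    finally show ?thesis using sh by blast
  next
    case False
    obtain T0 where T0: "T = ereal T0" "T0 \<ge> 0"
      using False assms(3) by (cases T) auto
    define J where "J = (SUP t\<in>{T0..}. ereal (max_wlatency V phi k str t))"
    have cJ: "cost V phi k T str = J" using False T0 by (simp add: cost_def J_def)
    have "ereal (max_wlatency V phi k str T0) \<le> J" unfolding J_def by (rule SUP_upper) simp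
    then have J0: "0 \<le> J" using Mnn[OF T0(2)] by (meson ereal_less_eq(5) order_trans)
    have "J < \<infinity>" using fin cJ by simp
    then obtain Jr where Jr: "J = ereal Jr" using J0 by (cases J) auto
    have bnd: "\<forall>t\<ge>T0. max_wlatency V phi k str t \<le> Jr"
    proof (intro allI impI)
      fix t assume "T0 \<le> t"
      then have "ereal (max_wlatency V phi k str t) \<le> J" unfolding J_def by (intro SUP_upper) simp
      then show "max_wlatency V phi k str t \<le> Jr" using Jr by simp
    qed
    obtain sh where sh: "feasible V E ends A k sh" "periodic k sh"
      "\<forall>t\<ge>T0. max_wlatency V phi k sh t \<le> Jr + delta"
      using core[OF G feas T0(2) bnd dl] by auto
    have "cost V phi k T sh = (SUP t\<in>{T0..}. ereal (max_wlatency V phi k sh t))"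
      using False T0 by (simp add: cost_def)
    also have "\<dots> \<le> ereal (Jr + delta)"
      using sh(3) by (intro SUP_least) auto
    also have "\<dots> = cost V phi k T str + ereal delta" using cJ Jr by simp
    finally show ?thesis using sh by blast
  qed
qed

end
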